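(* Let $p$ be a prime and let $s,g\geq1$ be integers with $s\mid g$. Then $$s\,r\!\left(\tfrac{2g}{s},p\right)+v_p(s!)\leq r(2g,p).$$
   Context: For a prime $p$ and an integer $n\geq1$, $r(n,p)=\sum_{i\geq0}\lfloor n/(p^i(p-1))\rfloor$. *)

theory Defs
  imports "HOL-Computational_Algebra.Computational_Algebra"
begin

text \<open>r(n,p) = sum over i >= 0 of floor(n / (p^i (p-1))). Only finitely many terms are
  nonzero (for p >= 2), so we sum over the (finite) set of indices with nonzero term.\<close>
definition r_fun :: "nat \<Rightarrow> nat \<Rightarrow> nat" where
  "r_fun n p = (\<Sum>i\<in>{i. n div (p ^ i * (p - 1)) \<noteq> 0}. n div (p ^ i * (p - 1)))"

end

theory Submission
  imports Defs
begin

lemma suc_div_step: "0 < (q::nat) \<Longrightarrow> Suc m div q = m div q + (if q dvd Suc m then 1 else 0)"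
proof -
  assume q: "0 < q"
  have "Suc m = q * (m div q) + (m mod q + 1)" by simp
  have "Suc m div q = m div q + (m mod q + 1) div q"
    using q div_add1_eq[of m 1 q] by simp
  moreover have "(m mod q + 1) div q = (if q dvd Suc m then 1 else 0)"
  proof (cases "m mod q + 1 = q")
    case True
    then show ?thesis using q by (simp add: dvd_eq_mod_eq_0 mod_Suc)
  next
    case False
    then have "m mod q + 1 < q" using q mod_less_divisor[of q m] by linarith
    then show ?thesis using q False by (simp add: dvd_eq_mod_eq_0 mod_Suc)
  qed
  ultimately show ?thesis by simp
qed

lemma legendre:
  fixes p :: nat
  assumes p: "prime p"
  shows "m \<le> N \<Longrightarrow> multiplicity p (fact m) = (\<Sum>i=1..N. m div p ^ i)"
proof (induction m)
  case 0
  then show ?case by simp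
next
  case (Suc m)
  have p1: "p > 1" using p prime_gt_1_nat by blast
  have IH: "multiplicity p (fact m) = (\<Sum>i=1..N. m div p ^ i)" using Suc by simp
  have "multiplicity p (fact (Suc m) :: nat) = multiplicity p (fact m) + multiplicity p (Suc m)"
  proof -
    have "(fact (Suc m) :: nat) = Suc m * fact m" by simp
    moreover have "multiplicity p (Suc m * fact m) = multiplicity p (Suc m) + multiplicity p (fact m :: nat)"
      by (rule prime_elem_multiplicity_mult_distrib) (use p in auto)
    ultimately show ?thesis by simp
  qed
  moreover have "(\<Sum>i=1..N. Suc m div p ^ i) = (\<Sum>i=1..N. m div p ^ i) + (\<Sum>i=1..N. (if p^i dvd Suc m then 1 else 0))"
  proof -
    have "(\<Sum>i=1..N. Suc m div p ^ i) = (\<Sum>i=1..N. m div p ^ i + (if p^i dvd Suc m then 1 else 0))"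
    proof (rule sum.cong[OF refl])
      fix i show "Suc m div p ^ i = m div p ^ i + (if p^i dvd Suc m then 1 else 0)"
        using p1 by (intro suc_div_step) simp
    qed
    then show ?thesis by (simp only: sum.distrib)
  qed
  moreover have "(\<Sum>i=1..N. (if p^i dvd Suc m then 1 else 0::nat)) = multiplicity p (Suc m)"
  proof -
    have nu: "\<not> is_unit p" using p1 by simp
    have pd: "\<And>k. p ^ k dvd Suc m \<longleftrightarrow> k \<le> multiplicity p (Suc m)"
      by (rule power_dvd_iff_le_multiplicity) (use nu in auto)
    have "multiplicity p (Suc m) < p ^ multiplicity p (Suc m)"
      using p1 less_exp[of "multiplicity p (Suc m)"] power_mono[of 2 p "multiplicity p (Suc m)"] by linarith
    also have "\<dots> \<le> Suc m" using multiplicity_dvd[of p "Suc m"] by (simp add: dvd_imp_le)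
    finally have mN: "multiplicity p (Suc m) \<le> N" using Suc.prems by simp
    have S: "{i\<in>{1..N}. p^i dvd Suc m} = {1..multiplicity p (Suc m)}"
      unfolding pd using mN by auto
    have "(\<Sum>i=1..N. (if p^i dvd Suc m then 1 else 0::nat)) = (\<Sum>i\<in>{i\<in>{1..N}. p^i dvd Suc m}. 1)"
      by (rule sum.inter_filter[symmetric]) simp
    also have "\<dots> = multiplicity p (Suc m)" unfolding S by simp
    finally show ?thesis .
  qed
  ultimately show ?case using IH by simp
qed

lemma r_fun_sum:
  fixes p :: nat
  assumes p: "p \<ge> 2" and nN: "n \<le> N"
  shows "r_fun n p = (\<Sum>i=0..N. n div (p ^ i * (p - 1)))"
  unfolding r_fun_def
proof (rule sum.mono_neutral_left)
  show "finite {0..N}" by simp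
  show "{i. n div (p ^ i * (p - 1)) \<noteq> 0} \<subseteq> {0..N}"
  proof
    fix i assume "i \<in> {i. n div (p ^ i * (p - 1)) \<noteq> 0}"
    then have "p ^ i * (p - 1) \<le> n" by (simp add: div_eq_0_iff)
    moreover have "i < p ^ i" using p less_exp[of i] power_mono[of 2 p i] by linarith
    moreover have "p ^ i \<le> p ^ i * (p - 1)" using p by simp
    ultimately have "i \<le> N" using nN by linarith
    then show "i \<in> {0..N}" by simp
  qed
  show "\<forall>i\<in>{0..N} - {i. n div (p ^ i * (p - 1)) \<noteq> 0}. n div (p ^ i * (p - 1)) = 0" by simp
qed


lemma r_fun_fact:
  fixes p :: nat
  assumes p: "prime p"
  shows "r_fun n p = n div (p - 1) + multiplicity p (fact (n div (p - 1)))"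
proof -
  have p2: "p \<ge> 2" using p prime_ge_2_nat by blast
  have "r_fun n p = (\<Sum>i=0..n. n div (p ^ i * (p - 1)))" using r_fun_sum[OF p2, of n n] by simp
  also have "\<dots> = (\<Sum>i=0..n. n div (p - 1) div p ^ i)"
    by (intro sum.cong refl) (metis div_mult2_eq mult.commute)
  also have "\<dots> = n div (p - 1) + (\<Sum>i=1..n. n div (p - 1) div p ^ i)"
    by (simp add: sum.atLeast_Suc_atMost)
  also have "(\<Sum>i=1..n. n div (p - 1) div p ^ i) = multiplicity p (fact (n div (p - 1)))"
    using legendre[OF p, of "n div (p - 1)" n] by simp
  finally show ?thesis .
qed

lemma mult_fact_mono:
  fixes p :: nat
  assumes "a \<le> b"
  shows "multiplicity p (fact a) \<le> multiplicity p (fact b)"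
  using assms by (intro dvd_imp_multiplicity_le fact_dvd) auto

lemma fact_pow_dvd:
  fixes m :: nat
  assumes "m \<ge> 1"
  shows "(fact m) ^ s * fact s dvd (fact (s * m) :: nat)"
proof (induction s)
  case 0
  then show ?case by simp
next
  case (Suc s)
  let ?C = "(s * m + m) choose m"
  have bf: "fact m * fact (s * m) * ?C = (fact (s * m + m) :: nat)"
    using binomial_fact_lemma[of m "s * m + m"] by simp
  have "m * ?C = (s * m + m) * ((s * m + m - 1) choose (m - 1))"
    using times_binomial_minus1_eq[of m "s * m + m"] assms by simp
  also have "\<dots> = m * ((Suc s) * ((s * m + m - 1) choose (m - 1)))" by (simp add: algebra_simps)
  finally have C: "?C = Suc s * ((s * m + m - 1) choose (m - 1))" using assms by simp
  define X where "X = (s * m + m - 1) choose (m - 1)"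
  have F0: "(fact (s * m + m) :: nat) = fact m * fact (s * m) * (Suc s * X)"
    using bf[symmetric] unfolding X_def by (simp only: C)
  have F: "(fact (s * m + m) :: nat) = (fact m * fact (s * m) * Suc s) * X"
    using F0 by (simp only: mult.assoc)
  have eq: "Suc s * m = s * m + m" by simp
  have "(fact m) ^ Suc s * fact (Suc s) = (fact m ^ s * fact s) * (fact m * Suc s)"
    by (simp add: algebra_simps)
  also have "\<dots> dvd fact (s * m) * (fact m * Suc s)"
    using Suc.IH by (rule mult_dvd_mono) simp
  also have "\<dots> dvd (fact (s * m + m) :: nat)"
    unfolding F by (rule dvdI[of _ _ X]) (simp add: algebra_simps)
  finally show ?case unfolding eq .
qed

lemma fact_le_r:
  fixes p :: nat
  assumes p: "prime p" and n: "n \<ge> 1"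
  shows "multiplicity p (fact s) \<le> r_fun (s * n) p"
proof -
  have p2: "p \<ge> 2" using p prime_ge_2_nat by blast
  define N where "N = Suc (s * n)"
  have "multiplicity p (fact s) = (\<Sum>i=1..N. s div p ^ i)"
    using legendre[OF p, of s N] n N_def by (simp add: le_SucI)
  also have "\<dots> \<le> (\<Sum>i=1..N. (s * n) div (p ^ (i - 1) * (p - 1)))"
  proof (rule sum_mono)
    fix i assume i: "i \<in> {1..N}"
    have le: "p ^ (i - 1) * (p - 1) \<le> p ^ i"
    proof -
      have "p ^ (i - 1) * (p - 1) \<le> p ^ (i - 1) * p" by simp
      also have "\<dots> = p ^ i" using i by (cases i) auto
      finally show ?thesis .
    qed
    have pos: "p ^ (i - 1) * (p - 1) > 0" using p2 by simp
    have "s div p ^ i \<le> s div (p ^ (i - 1) * (p - 1))" using pos le by (rule div_le_mono2)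
    also have "\<dots> \<le> (s * n) div (p ^ (i - 1) * (p - 1))" using n by (simp add: div_le_mono)
    finally show "s div p ^ i \<le> (s * n) div (p ^ (i - 1) * (p - 1))" .
  qed
  also have "\<dots> = (\<Sum>i=0..s * n. (s * n) div (p ^ i * (p - 1)))"
    unfolding N_def One_nat_def sum.shift_bounds_cl_Suc_ivl by simp
  also have "\<dots> = r_fun (s * n) p" using r_fun_sum[OF p2, of "s * n" "s * n"] by simp
  finally show ?thesis .
qed

theorem mainTheorem19:
  fixes p s g :: nat
  assumes "prime p" and "s \<ge> 1" and "g \<ge> 1" and "s dvd g"
  shows "s * r_fun (2 * g div s) p + multiplicity p (fact s) \<le> r_fun (2 * g) p"
proof -
  obtain k where k: "g = s * k" using assms(4) by blast
  define n where "n = 2 * k"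
  have kpos: "k \<ge> 1" using k assms(3) by (cases k) auto
  have nd: "2 * g div s = n" using k assms(2) n_def by simp
  have sn: "2 * g = s * n" using k n_def by simp
  have n1: "n \<ge> 1" using kpos n_def by simp
  define m where "m = n div (p - 1)"
  define M where "M = (s * n) div (p - 1)"
  have p2: "p \<ge> 2" using assms(1) prime_ge_2_nat by blast
  have smM: "s * m \<le> M"
  proof -
    have "s * m * (p - 1) \<le> s * n" unfolding m_def
      using div_times_less_eq_dividend[of n "p - 1"] mult_le_mono2[of "n div (p - 1) * (p - 1)" n s]
      by (simp add: ac_simps)
    then show ?thesis unfolding M_def using p2 less_eq_div_iff_mult_less_eq[of "p - 1" "s * m" "s * n"] by simp
  qed
  have rn: "r_fun n p = m + multiplicity p (fact m)" unfolding m_def by (rule r_fun_fact[OF assms(1)])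
  have rsn: "r_fun (s * n) p = M + multiplicity p (fact M)" unfolding M_def by (rule r_fun_fact[OF assms(1)])
  show ?thesis
  proof (cases "m = 0")
    case True
    then have "r_fun n p = 0" using rn by simp
    then show ?thesis unfolding nd unfolding sn using fact_le_r[OF assms(1) n1, of s] by simp
  next
    case False
    have "multiplicity p ((fact m) ^ s * fact s) \<le> multiplicity p (fact (s * m) :: nat)"
      using fact_pow_dvd[of m s] False by (intro dvd_imp_multiplicity_le) auto
    moreover have "multiplicity p ((fact m) ^ s * fact s) = s * multiplicity p (fact m) + multiplicity p (fact s :: nat)"
    proof -
      have pe: "prime_elem p" using assms(1) by simp
      have "multiplicity p ((fact m) ^ s * fact s) = multiplicity p ((fact m) ^ s) + multiplicity p (fact s :: nat)"
        by (rule prime_elem_multiplicity_mult_distrib[OF pe]) auto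
      moreover have "multiplicity p ((fact m) ^ s) = s * multiplicity p (fact m :: nat)"
        by (rule prime_elem_multiplicity_power_distrib[OF pe]) auto
      ultimately show ?thesis by simp
    qed
    moreover have "multiplicity p (fact (s * m) :: nat) \<le> multiplicity p (fact M)"
      using smM by (rule mult_fact_mono)
    moreover have "s * (m + multiplicity p (fact m)) = s * m + s * multiplicity p (fact m)"
      by (rule add_mult_distrib2)
    ultimately have "s * r_fun n p + multiplicity p (fact s) \<le> r_fun (s * n) p"
      unfolding rn rsn using smM by linarith
    then show ?thesis unfolding nd unfolding sn .
  qed
qed

end
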